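(* Let $\mathcal S=(\mathcal P,\mathcal L)$ be a linear space with $v$ points and constant line size $k$, $2<k<v$, and $b$ lines; let $G\le\mathrm{Aut}(\mathcal S)$ be transitive on lines, and let $\mathfrak C$ be a non-trivial $G$-invariant partition of $\mathcal P$ with $d$ classes of size $c$. If the permutation group $G^{\mathfrak C}$ induced by $G$ on $\mathfrak C$ is $t$-transitive, then $t\le t_{\max}$.
   Context: A linear space: a finite set $\mathcal P$ of points and a set $\mathcal L$ of subsets (lines) such that any two distinct points lie on exactly one line and each line has at least two points. For a line $\lambda$ and $0\le i\le k$, $d_i$ is the number of classes $C\in\mathfrak C$ with $|C\cap\lambda|=i$ (independent of $\lambda$); $\mathrm{spec}\,\mathcal S=\{i>0:d_i\ne0\}$. For a non-empty $S\subseteq\mathrm{spec}\,\mathcal S$ put $d(S)=\sum_{i\in S}d_i$. Define $t_{\max}$ to be the largest positive integer $t\le d$ such that for all non-empty $S\subseteq\mathrm{spec}\,\mathcal S$ and all positive integers $h\le\min\{t,d(S)\}$, the number $\prod_{j=0}^{h-1}(d-j)$ divides $b\prod_{j=0}^{h-1}(d(S)-j)$. *)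

theory Defs
  imports "HOL-Combinatorics.Permutations"
begin

definition linear_space :: "'a set \<Rightarrow> 'a set set \<Rightarrow> bool" where
  "linear_space P L \<longleftrightarrow> finite P \<and> (\<forall>l\<in>L. l \<subseteq> P \<and> 2 \<le> card l) \<and>
     (\<forall>x\<in>P. \<forall>y\<in>P. x \<noteq> y \<longrightarrow> (\<exists>!l. l \<in> L \<and> x \<in> l \<and> y \<in> l))"

definition perm_group_on :: "'a set \<Rightarrow> ('a \<Rightarrow> 'a) set \<Rightarrow> bool" where
  "perm_group_on P G \<longleftrightarrow> id \<in> G \<and> (\<forall>g\<in>G. g permutes P) \<and>
     (\<forall>g\<in>G. \<forall>h\<in>G. g \<circ> h \<in> G) \<and> (\<forall>g\<in>G. inv g \<in> G)"

definition aut_group :: "'a set \<Rightarrow> 'a set set \<Rightarrow> ('a \<Rightarrow> 'a) set \<Rightarrow> bool" where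
  "aut_group P L G \<longleftrightarrow> perm_group_on P G \<and> (\<forall>g\<in>G. (\<lambda>l. g ` l) ` L = L)"

definition line_transitive :: "'a set set \<Rightarrow> ('a \<Rightarrow> 'a) set \<Rightarrow> bool" where
  "line_transitive L G \<longleftrightarrow> (\<forall>l\<in>L. \<forall>m\<in>L. \<exists>g\<in>G. g ` l = m)"

definition partition_of :: "'a set \<Rightarrow> 'a set set \<Rightarrow> bool" where
  "partition_of P \<C> \<longleftrightarrow> \<Union>\<C> = P \<and> {} \<notin> \<C> \<and>
     (\<forall>C\<in>\<C>. \<forall>D\<in>\<C>. C \<noteq> D \<longrightarrow> C \<inter> D = {})"

definition G_invariant :: "('a \<Rightarrow> 'a) set \<Rightarrow> 'a set set \<Rightarrow> bool" where
  "G_invariant G \<C> \<longleftrightarrow> (\<forall>g\<in>G. \<forall>C\<in>\<C>. g ` C \<in> \<C>)"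

definition induced_t_transitive :: "('a \<Rightarrow> 'a) set \<Rightarrow> 'a set set \<Rightarrow> nat \<Rightarrow> bool" where
  "induced_t_transitive G \<C> t \<longleftrightarrow> t \<le> card \<C> \<and>
     (\<forall>xs ys. set xs \<subseteq> \<C> \<and> set ys \<subseteq> \<C> \<and> distinct xs \<and> distinct ys \<and>
        length xs = t \<and> length ys = t \<longrightarrow> (\<exists>g\<in>G. map (\<lambda>C. g ` C) xs = ys))"

definition dnum :: "'a set set \<Rightarrow> 'a set \<Rightarrow> nat \<Rightarrow> nat" where
  "dnum \<C> l i = card {C \<in> \<C>. card (C \<inter> l) = i}"

definition spec :: "'a set set \<Rightarrow> 'a set \<Rightarrow> nat set" where
  "spec \<C> l = {i. 0 < i \<and> dnum \<C> l i \<noteq> 0}"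

definition dS :: "'a set set \<Rightarrow> 'a set \<Rightarrow> nat set \<Rightarrow> nat" where
  "dS \<C> l S = (\<Sum>i\<in>S. dnum \<C> l i)"

definition tmax :: "'a set set \<Rightarrow> 'a set \<Rightarrow> nat \<Rightarrow> nat \<Rightarrow> nat" where
  "tmax \<C> l d b = (GREATEST t. 0 < t \<and> t \<le> d \<and>
     (\<forall>S. S \<subseteq> spec \<C> l \<and> S \<noteq> {} \<longrightarrow>
        (\<forall>h. 0 < h \<and> h \<le> min t (dS \<C> l S) \<longrightarrow>
          (\<Prod>j<h. d - j) dvd b * (\<Prod>j<h. dS \<C> l S - j))))"

end

theory Submission
  imports Defs
begin

lemma ff: "k \<le> n \<Longrightarrow> \<Prod>{n - k + 1..(n::nat)} = (\<Prod>j<k. n - j)"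
proof (induction k)
  case 0 then show ?case by simp
next
  case (Suc k)
  have "{n - Suc k + 1..n} = insert (n - k) {n - k + 1..n}" using Suc.prems by auto
  then show ?case using Suc by (simp add: mult.commute)
qed

lemma cardfilt: "finite A \<Longrightarrow> card {x\<in>A. P x} = (\<Sum>x\<in>A. if P x then 1 else 0::nat)"
  by (simp add: sum.If_cases Int_def)

lemma card_dl: "finite A \<Longrightarrow> h \<le> card A \<Longrightarrow>
  card {xs. length xs = h \<and> distinct xs \<and> set xs \<subseteq> A} = (\<Prod>j<h. card A - j)"
proof -
  assume a: "finite A" "h \<le> card A"
  have "card {xs. length xs = h \<and> distinct xs \<and> set xs \<subseteq> A} = \<Prod>{card A - h + 1..card A}"
    by (rule card_lists_distinct_length_eq[OF a])
  also have "\<dots> = (\<Prod>j<h. card A - j)" by (rule ff[OF a(2)])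
  finally show ?thesis .
qed

lemma extend_list:
  assumes "finite A" "set xs \<subseteq> A" "distinct xs" "length xs \<le> n" "n \<le> card A"
  shows "\<exists>zs. set zs \<subseteq> A \<and> distinct zs \<and> length zs = n \<and> take (length xs) zs = xs"
proof -
  obtain ws where ws: "set ws = A - set xs" "distinct ws" using finite_distinct_list assms(1) by blast
  have lw: "length ws = card A - length xs"
  proof -
    have "length ws = card (A - set xs)" using ws distinct_card by metis
    also have "\<dots> = card A - card (set xs)" using assms(2) by (simp add: card_Diff_subset)
    finally show ?thesis using assms(3) distinct_card by metis
  qed
  let ?zs = "xs @ take (n - length xs) ws"
  have "set ?zs \<subseteq> A" using ws assms(2) set_take_subset by fastforce
  moreover have "distinct ?zs" using ws assms(3)
    using set_take_subset[of "n - length xs" ws] by (auto simp: distinct_take)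
  moreover have "length ?zs = n" using lw assms by (simp add: distinct_card[symmetric])
  ultimately show ?thesis by (intro exI[of _ ?zs]) simp
qed

lemma h_trans:
  assumes "induced_t_transitive G \<C> t" "finite \<C>" "h \<le> t"
    "set xs \<subseteq> \<C>" "set ys \<subseteq> \<C>" "distinct xs" "distinct ys" "length xs = h" "length ys = h"
  shows "\<exists>g\<in>G. map (\<lambda>C. g ` C) xs = ys"
proof -
  have td: "t \<le> card \<C>" using assms(1) unfolding induced_t_transitive_def by blast
  obtain xs' where x: "set xs' \<subseteq> \<C>" "distinct xs'" "length xs' = t" "take h xs' = xs"
    using extend_list[of \<C> xs t] assms td by auto
  obtain ys' where y: "set ys' \<subseteq> \<C>" "distinct ys'" "length ys' = t" "take h ys' = ys"
    using extend_list[of \<C> ys t] assms td by auto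
  obtain g where g: "g \<in> G" "map (\<lambda>C. g ` C) xs' = ys'"
    using assms(1) x y unfolding induced_t_transitive_def by blast
  have "map (\<lambda>C. g ` C) xs = ys" using g(2) x(4) y(4) by (metis take_map)
  then show ?thesis using g(1) by blast
qed

lemma card_img_int: "inj g \<Longrightarrow> card (g ` C \<inter> g ` m) = card (C \<inter> m)"
  by (simp add: image_Int[symmetric] card_image inj_on_subset)

lemma cardA_le:
  assumes "inj g" "\<forall>C\<in>\<C>. g ` C \<in> \<C>" "finite \<C>"
  shows "card {C\<in>\<C>. card (C \<inter> m) \<in> S} \<le> card {C\<in>\<C>. card (C \<inter> g ` m) \<in> S}"
proof (rule card_inj_on_le[where f = "\<lambda>C. g ` C"])
  show "inj_on (\<lambda>C. g ` C) {C \<in> \<C>. card (C \<inter> m) \<in> S}"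
    using assms(1) by (simp add: inj_on_def inj_image_eq_iff)
  show "(\<lambda>C. g ` C) ` {C \<in> \<C>. card (C \<inter> m) \<in> S} \<subseteq> {C \<in> \<C>. card (C \<inter> g ` m) \<in> S}"
    using assms(2) by (auto simp: card_img_int[OF assms(1)])
  show "finite {C \<in> \<C>. card (C \<inter> g ` m) \<in> S}" using assms(3) by simp
qed

lemma N_le:
  assumes "inj g" "\<forall>m\<in>L. g ` m \<in> L" "finite L" "map (\<lambda>C. g ` C) xs0 = xs"
  shows "card {m\<in>L. \<forall>C\<in>set xs0. card (C \<inter> m) \<in> S} \<le> card {m\<in>L. \<forall>C\<in>set xs. card (C \<inter> m) \<in> S}"
proof (rule card_inj_on_le[where f = "\<lambda>C. g ` C"])
  show "inj_on (\<lambda>C. g ` C) {m\<in>L. \<forall>C\<in>set xs0. card (C \<inter> m) \<in> S}"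
    using assms(1) by (simp add: inj_on_def inj_image_eq_iff)
  show "(\<lambda>C. g ` C) ` {m\<in>L. \<forall>C\<in>set xs0. card (C \<inter> m) \<in> S} \<subseteq> {m\<in>L. \<forall>C\<in>set xs. card (C \<inter> m) \<in> S}"
    using assms(2) assms(4)[symmetric] by (auto simp: card_img_int[OF assms(1)])
  show "finite {m\<in>L. \<forall>C\<in>set xs. card (C \<inter> m) \<in> S}" using assms(3) by simp
qed

lemma dS_card:
  assumes "finite \<C>" "S \<subseteq> spec \<C> l"
  shows "dS \<C> l S = card {C\<in>\<C>. card (C \<inter> l) \<in> S}"
proof -
  have "S \<subseteq> (\<lambda>C. card (C \<inter> l)) ` \<C>"
  proof
    fix i assume "i \<in> S"
    then have "dnum \<C> l i \<noteq> 0" using assms(2) unfolding spec_def by auto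
    then have "{C \<in> \<C>. card (C \<inter> l) = i} \<noteq> {}" unfolding dnum_def by (metis card.empty)
    then show "i \<in> (\<lambda>C. card (C \<inter> l)) ` \<C>" by auto
  qed
  then have fS: "finite S" using assms(1) finite_surj by blast
  have "dS \<C> l S = (\<Sum>i\<in>S. card {C \<in> \<C>. card (C \<inter> l) = i})" unfolding dS_def dnum_def ..
  also have "\<dots> = card (\<Union>i\<in>S. {C \<in> \<C>. card (C \<inter> l) = i})"
    by (rule card_UN_disjoint[symmetric]) (use fS assms(1) in auto)
  also have "(\<Union>i\<in>S. {C \<in> \<C>. card (C \<inter> l) = i}) = {C\<in>\<C>. card (C \<inter> l) \<in> S}" by auto
  finally show ?thesis .
qed


theorem lemma4p7:
  fixes P :: "'a set" and L :: "'a set set" and G :: "('a \<Rightarrow> 'a) set"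
    and \<C> :: "'a set set" and v k b c d t :: nat and l :: "'a set"
  assumes "linear_space P L"
    and "card P = v" and "\<forall>m\<in>L. card m = k" and "2 < k" and "k < v"
    and "card L = b"
    and "aut_group P L G" and "line_transitive L G"
    and "partition_of P \<C>" and "G_invariant G \<C>"
    and "card \<C> = d" and "\<forall>C\<in>\<C>. card C = c" and "1 < d" and "1 < c"
    and "induced_t_transitive G \<C> t"
    and "l \<in> L"
  shows "t \<le> tmax \<C> l d b"
proof (cases "t = 0")
  case True show ?thesis unfolding True by (rule le0)
next
  case False
  have finP: "finite P" using conjunct1[OF assms(1)[unfolded linear_space_def]] .
  have finL: "finite L"
  proof -
    have "\<forall>l\<in>L. l \<subseteq> P \<and> 2 \<le> card l" using conjunct1[OF conjunct2[OF assms(1)[unfolded linear_space_def]]] .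
    then have "L \<subseteq> Pow P" by blast
    then show ?thesis using finP finite_subset by blast
  qed
  have finC: "finite \<C>" using assms(11,13) card.infinite by fastforce
  have td: "t \<le> d" using conjunct1[OF assms(15)[unfolded induced_t_transitive_def]] assms(11) by simp
  have injG: "inj g" if "g \<in> G" for g
  proof -
    have "\<forall>g\<in>G. g permutes P" using assms(7) unfolding aut_group_def perm_group_on_def by simp
    then show ?thesis using that permutes_inj by blast
  qed
  have Cinv: "\<forall>C\<in>\<C>. g ` C \<in> \<C>" if "g \<in> G" for g
    using that assms(10) unfolding G_invariant_def by blast
  have Linv: "\<forall>m\<in>L. g ` m \<in> L" if "g \<in> G" for g
  proof -
    have "\<forall>g\<in>G. (\<lambda>l. g ` l) ` L = L" using assms(7) unfolding aut_group_def by simp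
    then show ?thesis using that by blast
  qed
  have key: "(\<Prod>j<h. d - j) dvd b * (\<Prod>j<h. dS \<C> l S - j)"
    if S: "S \<subseteq> spec \<C> l" "S \<noteq> {}" and h: "0 < h" "h \<le> min t (dS \<C> l S)" for S h
  proof -
    define A where "A m = {C\<in>\<C>. card (C \<inter> m) \<in> S}" for m
    define e where "e = dS \<C> l S"
    have e: "e = card (A l)" unfolding e_def A_def using dS_card[OF finC S(1)] .
    have Am: "card (A m) = e" if mL: "m \<in> L" for m
    proof -
      have LT: "\<forall>l\<in>L. \<forall>m\<in>L. \<exists>g\<in>G. g ` l = m" using assms(8) unfolding line_transitive_def .
      obtain g where g: "g \<in> G" "g ` l = m" using LT[rule_format, OF assms(16) mL] by (elim bexE)
      obtain g' where g': "g' \<in> G" "g' ` m = l" using LT[rule_format, OF mL assms(16)] by (elim bexE)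
      have "card (A l) \<le> card (A m)" unfolding A_def using cardA_le[OF injG[OF g(1)] Cinv[OF g(1)] finC, of l S] unfolding g(2) .
      moreover have "card (A m) \<le> card (A l)" unfolding A_def using cardA_le[OF injG[OF g'(1)] Cinv[OF g'(1)] finC, of m S] unfolding g'(2) .
      ultimately show ?thesis using e by simp
    qed
    define T where "T = {xs. length xs = h \<and> distinct xs \<and> set xs \<subseteq> \<C>}"
    define good where "good (m::'a set) (xs::'a set list) = (\<forall>C\<in>set xs. card (C \<inter> m) \<in> S)" for m xs
    have finT: "finite T"
    proof -
      have "T \<subseteq> {xs. set xs \<subseteq> \<C> \<and> length xs = h}" unfolding T_def by auto
      then show ?thesis using finite_lists_length_eq[OF finC] finite_subset by blast
    qed
    have hd: "h \<le> d" using h td by simp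
    have cardT: "card T = (\<Prod>j<h. d - j)" unfolding T_def using card_dl[OF finC] hd assms(11) by simp
    have "(\<Prod>j<h. d - j) \<noteq> 0" using hd by (simp add: prod_zero_iff)
    then have "T \<noteq> {}" using cardT by auto
    then obtain xs0 where xs0: "xs0 \<in> T" by blast
    define N where "N = card {m\<in>L. good m xs0}"
    have Nc: "card {m\<in>L. good m xs} = N" if xT: "xs \<in> T" for xs
    proof -
      obtain g where g: "g \<in> G" "map (\<lambda>C. g ` C) xs0 = xs"
        using h_trans[OF assms(15) finC, of h xs0 xs] xT xs0 h unfolding T_def by auto
      obtain g' where g': "g' \<in> G" "map (\<lambda>C. g' ` C) xs = xs0"
        using h_trans[OF assms(15) finC, of h xs xs0] xT xs0 h unfolding T_def by auto
      show ?thesis unfolding N_def good_def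
        using N_le[OF injG[OF g(1)] Linv[OF g(1)] finL g(2), of S]
          N_le[OF injG[OF g'(1)] Linv[OF g'(1)] finL g'(2), of S] by simp
    qed
    have line_count: "card {xs\<in>T. good m xs} = (\<Prod>j<h. e - j)" if "m \<in> L" for m
    proof -
      have "{xs\<in>T. good m xs} = {xs. length xs = h \<and> distinct xs \<and> set xs \<subseteq> A m}"
        unfolding T_def good_def A_def by auto
      moreover have "h \<le> card (A m)" using Am[OF that] h e_def by simp
      ultimately show ?thesis using card_dl[of "A m" h] Am[OF that] finC unfolding A_def by simp
    qed
    have "b * (\<Prod>j<h. e - j) = (\<Sum>m\<in>L. card {xs\<in>T. good m xs})"
      using line_count assms(6) by simp
    also have "\<dots> = (\<Sum>m\<in>L. \<Sum>xs\<in>T. if good m xs then 1 else 0)"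
      using cardfilt[OF finT] by simp
    also have "\<dots> = (\<Sum>xs\<in>T. \<Sum>m\<in>L. if good m xs then 1 else 0)"
      by (rule sum.swap)
    also have "\<dots> = (\<Sum>xs\<in>T. card {m\<in>L. good m xs})"
      using cardfilt[OF finL] by simp
    also have "\<dots> = card T * N" using Nc by simp
    finally have "b * (\<Prod>j<h. e - j) = (\<Prod>j<h. d - j) * N" using cardT by simp
    then show ?thesis unfolding e_def by (metis dvd_triv_left)
  qed
  show ?thesis unfolding tmax_def
  proof (rule Greatest_le_nat[where b = d])
    show "0 < t \<and> t \<le> d \<and> (\<forall>S. S \<subseteq> spec \<C> l \<and> S \<noteq> {} \<longrightarrow>
        (\<forall>h. 0 < h \<and> h \<le> min t (dS \<C> l S) \<longrightarrow>
          (\<Prod>j<h. d - j) dvd b * (\<Prod>j<h. dS \<C> l S - j)))"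
      using False td key by auto
  qed (erule conjE, erule conjE, assumption)
qed

end
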